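(* Let $\frac{\log n}{n}\le p\le\frac{2\log n}{n}$. Then with probability $1-o(1)$ the graph $G\sim\mathcal G(n,p)$ has the following property. Suppose $B=(S\cup W,E')$ is a bipartite (not necessarily induced) subgraph of $G$ with parts $S$ and $W$ such that (i) $|S|\le\frac{n}{\log^{0.9}n}$, (ii) $|W|=(1+o(1))\frac{n}{\log\log n}$, and (iii) $d_B(v)\ge\frac{\log n}{(\log\log n)^2}$ for every $v\in S$. Then $B$ contains a $\log^{0.2}n$-matching from $S$ to $W$, i.e., a subgraph $M\subseteq B$ in which every $s\in S$ has exactly $\log^{0.2}n$ neighbors and every $w\in W$ has degree at most $1$.
   Context: $\mathcal G(n,p)$ is the binomial random graph on $[n]$ in which each pair is an edge independently with probability $p$. Rounding is ignored. Asymptotics as $n\to\infty$. *)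

theory Defs
  imports "HOL-Probability.Probability"
begin

text \<open>Vertex set [n] is rendered as {..<n}; edges are 2-element sets.\<close>

definition all_pairs :: "nat \<Rightarrow> nat set set" where
  "all_pairs n = {{u, v} | u v. u < n \<and> v < n \<and> u \<noteq> v}"

definition gnp :: "nat \<Rightarrow> real \<Rightarrow> nat set set pmf" where
  "gnp n p = map_pmf (\<lambda>f. {e \<in> all_pairs n. f e})
                     (Pi_pmf (all_pairs n) False (\<lambda>_. bernoulli_pmf p))"

definition deg :: "nat set set \<Rightarrow> nat \<Rightarrow> nat" where
  "deg F v = card {e \<in> F. v \<in> e}"

text \<open>The graph property of the lemma, for a graph with edge set E on [n]
  and a given error function value d (the o(1) in |W| = (1+o(1)) n / log log n).\<close>
definition matching_property :: "nat \<Rightarrow> real \<Rightarrow> nat set set \<Rightarrow> bool" where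
  "matching_property n d E \<longleftrightarrow>
    (\<forall>S W E'.
       S \<subseteq> {..<n} \<and> W \<subseteq> {..<n} \<and> S \<inter> W = {} \<and>
       E' \<subseteq> E \<and> E' \<subseteq> {{s, w} | s w. s \<in> S \<and> w \<in> W} \<and>
       real (card S) \<le> real n / (ln (real n)) powr 0.9 \<and>
       (1 - d) * (real n / ln (ln (real n))) \<le> real (card W) \<and>
       real (card W) \<le> (1 + d) * (real n / ln (ln (real n))) \<and>
       (\<forall>v\<in>S. real (deg E' v) \<ge> ln (real n) / (ln (ln (real n)))\<^sup>2)
     \<longrightarrow> (\<exists>M \<subseteq> E'.
            (\<forall>s\<in>S. deg M s = nat \<lfloor>(ln (real n)) powr 0.2\<rfloor>) \<and>
            (\<forall>w\<in>W. deg M w \<le> 1)))"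

end

theory Submission
  imports Defs "HOL-Real_Asymp.Real_Asymp"
begin


lemma hall:
  fixes A :: "'i \<Rightarrow> 'b set"
  assumes "finite I" "\<forall>i\<in>I. finite (A i)" "\<forall>J\<subseteq>I. card J \<le> card (\<Union>(A ` J))"
  shows "\<exists>f. inj_on f I \<and> (\<forall>i\<in>I. f i \<in> A i)"
  using assms
proof (induction "card I" arbitrary: I A rule: less_induct)
  case less
  show ?case
  proof (cases "\<exists>J. J \<subseteq> I \<and> J \<noteq> {} \<and> J \<noteq> I \<and> card (\<Union>(A ` J)) \<le> card J")
    case True
    then obtain J where J: "J \<subseteq> I" "J \<noteq> {}" "J \<noteq> I" "card (\<Union>(A ` J)) \<le> card J" by blast
    have finJ: "finite J" using J less.prems by (meson finite_subset)
    have cJ: "card J < card I" using J less.prems psubset_card_mono by blast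
    obtain f1 where f1: "inj_on f1 J" "\<forall>i\<in>J. f1 i \<in> A i"
    proof -
      have "\<exists>f. inj_on f J \<and> (\<forall>i\<in>J. f i \<in> A i)"
        by (rule less.hyps[OF cJ]) (use J finJ less.prems in auto)
      thus ?thesis using that by blast
    qed
    define U where "U = \<Union>(A ` J)"
    have finU: "finite U" using finJ less.prems J unfolding U_def by auto
    have cU: "card U = card J" using J less.prems(3) unfolding U_def by (simp add: le_antisym)
    define A2 where "A2 = (\<lambda>i. A i - U)"
    have c2: "card (I - J) < card I"
      proof -
      have "card (I - J) = card I - card J" using J finJ by (simp add: card_Diff_subset)
      moreover have "card J > 0" using J finJ by auto
      ultimately show ?thesis using cJ by linarith
    qed
    have h2: "\<forall>K\<subseteq>I-J. card K \<le> card (\<Union>(A2 ` K))"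
    proof (intro allI impI)
      fix K assume K: "K \<subseteq> I - J"
      have finK: "finite K" using K less.prems by (meson finite_Diff finite_subset)
      have eq: "\<Union>(A ` (K \<union> J)) = \<Union>(A2 ` K) \<union> U" unfolding A2_def U_def by auto
      have disj: "\<Union>(A2 ` K) \<inter> U = {}" unfolding A2_def by auto
      have fin2: "finite (\<Union>(A2 ` K))" using finK less.prems K unfolding A2_def by (intro finite_Diff finite_UN_I) auto
      have "card K + card J = card (K \<union> J)" using K finK finJ by (subst card_Un_disjoint) auto
      also have "\<dots> \<le> card (\<Union>(A ` (K \<union> J)))" using less.prems(3)[rule_format, of "K \<union> J"] K J by auto
      also have "\<dots> = card (\<Union>(A2 ` K)) + card U" using eq disj fin2 finU card_Un_disjoint by metis
      finally show "card K \<le> card (\<Union>(A2 ` K))" using cU by simp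
    qed
    obtain f2 where f2: "inj_on f2 (I-J)" "\<forall>i\<in>I-J. f2 i \<in> A2 i"
    proof -
      have "\<exists>f. inj_on f (I-J) \<and> (\<forall>i\<in>I-J. f i \<in> A2 i)"
        by (rule less.hyps[OF c2]) (use h2 less.prems in \<open>auto simp: A2_def\<close>)
      thus ?thesis using that by blast
    qed
    define f where "f = (\<lambda>i. if i \<in> J then f1 i else f2 i)"
    have "inj_on f I"
    proof (rule inj_onI)
      fix i j assume ij: "i \<in> I" "j \<in> I" "f i = f j"
      show "i = j"
      proof (cases "i \<in> J"; cases "j \<in> J")
        assume "i \<in> J" "j \<in> J" thus ?thesis using ij f1 unfolding f_def by (auto dest: inj_onD)
      next
        assume "i \<notin> J" "j \<notin> J" thus ?thesis using ij f2 unfolding f_def by (auto dest: inj_onD)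
      next
        assume a: "i \<in> J" "j \<notin> J"
        have "f i \<in> U" using a f1 unfolding f_def U_def by auto
        moreover have "f j \<notin> U" using a f2 ij(2) unfolding f_def A2_def by auto
        ultimately show ?thesis using ij by simp
      next
        assume a: "i \<notin> J" "j \<in> J"
        have "f j \<in> U" using a f1 unfolding f_def U_def by auto
        moreover have "f i \<notin> U" using a f2 ij(1) unfolding f_def A2_def by auto
        ultimately show ?thesis using ij by simp
      qed
    qed
    moreover have "\<forall>i\<in>I. f i \<in> A i" using f1 f2 unfolding f_def A2_def by auto
    ultimately show ?thesis by blast
  next
    case False
    hence big: "\<forall>J. J \<subseteq> I \<and> J \<noteq> {} \<and> J \<noteq> I \<longrightarrow> card J < card (\<Union>(A ` J))" by auto
    show ?thesis
    proof (cases "I = {}")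
      case True then show ?thesis by auto
    next
      case False
      then obtain i0 where i0: "i0 \<in> I" by auto
      have "1 \<le> card (A i0)" using less.prems(3)[rule_format, of "{i0}"] i0 by simp
      then obtain x where x: "x \<in> A i0" by (metis card.empty ex_in_conv not_one_le_zero)
      define A' where "A' = (\<lambda>i. A i - {x})"
      have c': "card (I - {i0}) < card I" using i0 less.prems by (meson card_Diff1_less)
      have h': "\<forall>K\<subseteq>I-{i0}. card K \<le> card (\<Union>(A' ` K))"
      proof (intro allI impI)
        fix K assume K: "K \<subseteq> I - {i0}"
        show "card K \<le> card (\<Union>(A' ` K))"
        proof (cases "K = {}")
          case True thus ?thesis by simp
        next
          case False
          have finK: "finite K" using K less.prems by (meson finite_Diff finite_subset)
          have a1: "card K < card (\<Union>(A ` K))" using big K False i0 by auto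
          have a2: "\<Union>(A ` K) \<subseteq> insert x (\<Union>(A' ` K))" unfolding A'_def by auto
          have a3: "finite (\<Union>(A' ` K))" using finK K less.prems unfolding A'_def by (intro finite_Diff finite_UN_I) auto
          note a = a1 a2 a3
          show ?thesis
            proof -
            have "card (\<Union>(A ` K)) \<le> card (insert x (\<Union>(A' ` K)))" using a by (intro card_mono) auto
            also have "\<dots> \<le> Suc (card (\<Union>(A' ` K)))" by (simp add: card_insert_le_m1 card_insert_if a)
            finally show ?thesis using a by linarith
          qed
        qed
      qed
      obtain f' where f': "inj_on f' (I - {i0})" "\<forall>i\<in>I-{i0}. f' i \<in> A' i"
      proof -
        have "\<exists>f. inj_on f (I-{i0}) \<and> (\<forall>i\<in>I-{i0}. f i \<in> A' i)"
          by (rule less.hyps[OF c']) (use h' less.prems in \<open>auto simp: A'_def\<close>)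
        thus ?thesis using that by blast
      qed
      define f where "f = f'(i0 := x)"
      have "inj_on f (insert i0 (I - {i0}))"
        unfolding inj_on_insert using f' unfolding f_def A'_def
        by (auto simp: inj_on_def)
      moreover have "insert i0 (I - {i0}) = I" using i0 by auto
      moreover have "\<forall>i\<in>I. f i \<in> A i" using f' x unfolding f_def A'_def by auto
      ultimately show ?thesis by metis
    qed
  qed
qed



definition pairs :: "nat set \<Rightarrow> nat set \<Rightarrow> nat set set" where
  "pairs X Y = {{s, w} | s w. s \<in> X \<and> w \<in> Y}"

definition nbh :: "nat set set \<Rightarrow> nat set \<Rightarrow> nat set \<Rightarrow> nat set" where
  "nbh E' W X = {w\<in>W. \<exists>s\<in>X. {s, w} \<in> E'}"

lemma kmatch:
  fixes S W :: "nat set" and E' :: "nat set set" and k :: nat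
  assumes fin: "finite S" "finite W" and disj: "S \<inter> W = {}"
    and sub: "E' \<subseteq> pairs S W"
    and hallc: "\<forall>X\<subseteq>S. k * card X \<le> card (nbh E' W X)"
  shows "\<exists>M \<subseteq> E'. (\<forall>s\<in>S. deg M s = k) \<and> (\<forall>w\<in>W. deg M w \<le> 1)"
proof -
  define I where "I = S \<times> {..<k}"
  define A where "A = (\<lambda>i::nat\<times>nat. nbh E' W {fst i})"
  have finI: "finite I" using fin unfolding I_def by auto
  have finA: "\<forall>i\<in>I. finite (A i)" using fin unfolding A_def nbh_def by auto
  have hc: "\<forall>J\<subseteq>I. card J \<le> card (\<Union>(A ` J))"
  proof (intro allI impI)
    fix J assume J: "J \<subseteq> I"
    define X where "X = fst ` J"
    have XS: "X \<subseteq> S" using J unfolding X_def I_def by auto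
    have "J \<subseteq> X \<times> {..<k}" using J unfolding X_def I_def by force
    hence "card J \<le> card (X \<times> {..<k})" using fin XS by (intro card_mono) (auto intro: finite_subset)
    also have "\<dots> = k * card X" by (simp add: card_cartesian_product)
    also have "\<dots> \<le> card (nbh E' W X)" using hallc XS by auto
    also have "nbh E' W X = \<Union>(A ` J)" unfolding A_def nbh_def X_def by auto
    finally show "card J \<le> card (\<Union>(A ` J))" .
  qed
  obtain f where f: "inj_on f I" "\<forall>i\<in>I. f i \<in> A i" using hall[OF finI finA hc] by blast
  define M where "M = (\<lambda>i. {fst i, f i}) ` I"
  have fW: "\<forall>i\<in>I. f i \<in> W \<and> {fst i, f i} \<in> E'" using f(2) unfolding A_def nbh_def by auto
  have fS: "\<forall>i\<in>I. fst i \<in> S" unfolding I_def by auto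
  have "M \<subseteq> E'" unfolding M_def using fW by auto
  moreover have "\<forall>s\<in>S. deg M s = k"
  proof
    fix s assume s: "s \<in> S"
    have eq: "{e \<in> M. s \<in> e} = (\<lambda>j. {s, f (s, j)}) ` {..<k}"
    proof
      show "{e \<in> M. s \<in> e} \<subseteq> (\<lambda>j. {s, f (s, j)}) ` {..<k}"
      proof
        fix e assume e: "e \<in> {e \<in> M. s \<in> e}"
        then obtain i where i: "i \<in> I" "e = {fst i, f i}" unfolding M_def by auto
        have "f i \<noteq> s" using fW i s disj by auto
        hence "fst i = s" using e i by auto
        thus "e \<in> (\<lambda>j. {s, f (s, j)}) ` {..<k}" using i unfolding I_def by force
      qed
      show "(\<lambda>j. {s, f (s, j)}) ` {..<k} \<subseteq> {e \<in> M. s \<in> e}"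
        using s unfolding M_def I_def by force
    qed
    have "inj_on (\<lambda>j. {s, f (s, j)}) {..<k}"
    proof (rule inj_onI)
      fix j j' assume jj: "j \<in> {..<k}" "j' \<in> {..<k}" "{s, f (s, j)} = {s, f (s, j')}"
      have "f (s, j) \<in> W" "f (s, j') \<in> W" using fW jj s unfolding I_def by auto
      hence "f (s, j) \<noteq> s" "f (s, j') \<noteq> s" using s disj by auto
      hence "f (s, j) = f (s, j')" using jj(3) by (auto simp: doubleton_eq_iff)
      thus "j = j'" using f(1) jj s unfolding I_def by (auto dest: inj_onD)
    qed
    thus "deg M s = k" unfolding deg_def eq by (simp add: card_image)
  qed
  moreover have "\<forall>w\<in>W. deg M w \<le> 1"
  proof
    fix w assume w: "w \<in> W"
    have "\<forall>e\<in>{e \<in> M. w \<in> e}. \<forall>e'\<in>{e \<in> M. w \<in> e}. e = e'"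
    proof (intro ballI)
      fix e e' assume e: "e \<in> {e \<in> M. w \<in> e}" and e': "e' \<in> {e \<in> M. w \<in> e}"
      obtain i where i: "i \<in> I" "e = {fst i, f i}" using e unfolding M_def by auto
      obtain i' where i': "i' \<in> I" "e' = {fst i', f i'}" using e' unfolding M_def by auto
      have "fst i \<noteq> w" "fst i' \<noteq> w" using fS i i' w disj by auto
      hence "f i = w" "f i' = w" using e e' i i' by auto
      hence "i = i'" using f(1) i i' by (auto dest: inj_onD)
      thus "e = e'" using i i' by simp
    qed
    moreover have "finite {e \<in> M. w \<in> e}" using finI unfolding M_def by auto
    ultimately show "deg M w \<le> 1" unfolding deg_def by (simp add: card_le_Suc0_iff_eq)
  qed
  ultimately show ?thesis by blast
qed



lemma pairs_image: "pairs X Y = (\<lambda>(s, w). {s, w}) ` (X \<times> Y)"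
  unfolding pairs_def by auto

lemma finite_pairs: "finite X \<Longrightarrow> finite Y \<Longrightarrow> finite (pairs X Y)"
  unfolding pairs_image by auto

lemma card_pairs: "finite X \<Longrightarrow> finite Y \<Longrightarrow> card (pairs X Y) \<le> card X * card Y"
  unfolding pairs_image by (metis card_cartesian_product card_image_le finite_cartesian_product)

lemma det:
  fixes n k :: nat and T D :: real and E E' :: "nat set set"
  assumes S: "S \<subseteq> {..<n}" and W: "W \<subseteq> {..<n}" and disj: "S \<inter> W = {}"
    and EE: "E' \<subseteq> E" and EP: "E' \<subseteq> pairs S W"
    and cS: "real (card S) \<le> T" and dg: "\<forall>v\<in>S. D \<le> real (deg E' v)"
    and nm: "\<not>(\<exists>M\<subseteq>E'. (\<forall>s\<in>S. deg M s = k) \<and> (\<forall>w\<in>W. deg M w \<le> 1))"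
    and kn: "k * nat \<lfloor>T\<rfloor> \<le> n"
  shows "\<exists>t\<in>{1..nat \<lfloor>T\<rfloor>}. \<exists>X. X \<subseteq> {..<n} \<and> card X = t \<and>
           (\<exists>Y. Y \<subseteq> {..<n} \<and> card Y = k * t \<and> D * real t \<le> real (card (E \<inter> pairs X Y)))"
proof -
  have finS: "finite S" using S finite_subset by blast
  have finW: "finite W" using W finite_subset by blast
  obtain X where X: "X \<subseteq> S" "card (nbh E' W X) < k * card X"
    using kmatch[OF finS finW disj EP] nm by (meson not_le)
  define t where "t = card X"
  have finX: "finite X" using X finS finite_subset by blast
  have t1: "1 \<le> t" proof -
    have "card X \<noteq> 0" using X(2) by (metis less_nat_zero_code mult_0_right)
    thus ?thesis unfolding t_def by simp
  qed
  have "card X \<le> card S" using X finS card_mono by blast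
  hence "real t \<le> T" using cS unfolding t_def by linarith
  hence tT: "t \<le> nat \<lfloor>T\<rfloor>" by (rule le_nat_floor)
  define N where "N = nbh E' W X"
  have NW: "N \<subseteq> W" unfolding N_def nbh_def by auto
  have finN: "finite N" using NW finW finite_subset by blast
  have cN: "card N < k * t" using X unfolding N_def t_def by simp
  have "k * t \<le> n" using kn tT by (meson le_trans mult_le_mono2)
  hence "k * t - card N \<le> card ({..<n} - N)" using NW W finN by (simp add: card_Diff_subset)
  then obtain Z where Z: "Z \<subseteq> {..<n} - N" "card Z = k * t - card N" "finite Z"
    by (meson obtain_subset_with_card_n)
  define Y where "Y = N \<union> Z"
  have Yn: "Y \<subseteq> {..<n}" using Z NW W unfolding Y_def by auto
  have cY: "card Y = k * t" unfolding Y_def using Z finN cN by (subst card_Un_disjoint) auto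
  have finY: "finite Y" unfolding Y_def using Z finN by auto
  define F where "F = (\<lambda>s. {e \<in> E'. s \<in> e})"
  have Fsub: "\<Union>(F ` X) \<subseteq> E \<inter> pairs X Y"
  proof
    fix e assume "e \<in> \<Union>(F ` X)"
    then obtain s where s: "s \<in> X" "e \<in> E'" "s \<in> e" unfolding F_def by auto
    obtain s' w where sw: "s' \<in> S" "w \<in> W" "e = {s', w}" using s EP unfolding pairs_def by auto
    have "s \<noteq> w" using s X sw disj by auto
    hence "s = s'" using s sw by auto
    hence "w \<in> N" using s sw unfolding N_def nbh_def by auto
    thus "e \<in> E \<inter> pairs X Y" using s sw EE \<open>s = s'\<close> unfolding pairs_def Y_def by auto
  qed
  have finF: "\<forall>s\<in>X. finite (F s)"
    using finite_subset[OF EP finite_pairs[OF finS finW]] unfolding F_def by auto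
  have disjF: "\<forall>s\<in>X. \<forall>s'\<in>X. s \<noteq> s' \<longrightarrow> F s \<inter> F s' = {}"
  proof (intro ballI impI)
    fix s1 s2 assume s: "s1 \<in> X" "s2 \<in> X" "s1 \<noteq> s2"
    show "F s1 \<inter> F s2 = {}"
    proof (rule ccontr)
      assume "F s1 \<inter> F s2 \<noteq> {}"
      then obtain e where e: "e \<in> E'" "s1 \<in> e" "s2 \<in> e" unfolding F_def by auto
      obtain s' w where sw: "s' \<in> S" "w \<in> W" "e = {s', w}" using e EP unfolding pairs_def by auto
      have "s1 \<noteq> w" "s2 \<noteq> w" using s X sw disj by auto
      thus False using e sw s by auto
    qed
  qed
  have "D * real t = (\<Sum>s\<in>X. D)" unfolding t_def by simp
  also have "\<dots> \<le> (\<Sum>s\<in>X. real (card (F s)))"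
    using dg X unfolding F_def deg_def by (intro sum_mono) auto
  also have "\<dots> = real (card (\<Union>(F ` X)))"
    using card_UN_disjoint[OF finX finF disjF] by simp
  also have "\<dots> \<le> real (card (E \<inter> pairs X Y))"
    using Fsub finite_pairs[OF finX finY] by (simp add: card_mono)
  finally have "D * real t \<le> real (card (E \<inter> pairs X Y))" .
  moreover have "X \<subseteq> {..<n}" using X S by auto
  ultimately show ?thesis using t1 tT Yn cY unfolding t_def by (intro bexI[of _ "card X"]) auto
qed

lemma finite_all_pairs: "finite (all_pairs n)"
proof -
  have "all_pairs n \<subseteq> Pow {..<n}" unfolding all_pairs_def by auto
  thus ?thesis by (rule finite_subset) auto
qed

lemma prob_sub:
  assumes "0 \<le> p" "p \<le> 1" "finite A"
  shows "measure_pmf.prob (gnp n p) {E. A \<subseteq> E} \<le> p ^ card A"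
proof (cases "A \<subseteq> all_pairs n")
  case True
  define B where "B = (\<lambda>e. if e \<in> A then {True} else (UNIV :: bool set))"
  have eq: "(\<lambda>f. {e \<in> all_pairs n. f e}) -` {E. A \<subseteq> E} = Pi (all_pairs n) B"
    using True unfolding B_def by (auto simp: Pi_def)
  have "measure_pmf.prob (gnp n p) {E. A \<subseteq> E}
      = (\<Prod>e\<in>all_pairs n. measure_pmf.prob (bernoulli_pmf p) (B e))"
    unfolding gnp_def measure_map_pmf eq by (rule measure_Pi_pmf_Pi[OF finite_all_pairs])
  also have "\<dots> = (\<Prod>e\<in>all_pairs n. if e \<in> A then p else 1)"
    unfolding B_def using assms by (intro prod.cong) (auto simp: measure_pmf_single)
  also have "\<dots> = (\<Prod>e\<in>all_pairs n \<inter> A. p)"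
    by (rule prod.inter_restrict[OF finite_all_pairs, symmetric])
  also have "\<dots> = p ^ card A" using True by (simp add: Int_absorb1)
  finally show ?thesis by simp
next
  case False
  have "(\<lambda>f. {e \<in> all_pairs n. f e}) -` {E. A \<subseteq> E} = {}" using False by auto
  hence "measure_pmf.prob (gnp n p) {E. A \<subseteq> E} = 0" unfolding gnp_def measure_map_pmf by simp
  thus ?thesis using assms by simp
qed

lemma union_bound:
  fixes M :: "'a pmf"
  assumes "finite I"
  shows "measure_pmf.prob M (\<Union>i\<in>I. A i) \<le> (\<Sum>i\<in>I. measure_pmf.prob M (A i))"
  using assms by (intro measure_subadditive_finite) (auto simp: measure_pmf.emeasure_finite)

lemma prob_count:
  assumes "0 \<le> p" "p \<le> 1" "finite P"
  shows "measure_pmf.prob (gnp n p) {E. a \<le> card (E \<inter> P)} \<le> real (card P choose a) * p ^ a"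
proof -
  define I where "I = {A. A \<subseteq> P \<and> card A = a}"
  have finI: "finite I" unfolding I_def using assms by auto
  have "{E. a \<le> card (E \<inter> P)} \<subseteq> (\<Union>A\<in>I. {E. A \<subseteq> E})"
  proof
    fix E assume "E \<in> {E. a \<le> card (E \<inter> P)}"
    then obtain A where "A \<subseteq> E \<inter> P" "card A = a" by (meson mem_Collect_eq obtain_subset_with_card_n)
    thus "E \<in> (\<Union>A\<in>I. {E. A \<subseteq> E})" unfolding I_def by auto
  qed
  hence "measure_pmf.prob (gnp n p) {E. a \<le> card (E \<inter> P)} \<le> measure_pmf.prob (gnp n p) (\<Union>A\<in>I. {E. A \<subseteq> E})"
    by (intro measure_pmf.finite_measure_mono) auto
  also have "\<dots> \<le> (\<Sum>A\<in>I. measure_pmf.prob (gnp n p) {E. A \<subseteq> E})" by (rule union_bound[OF finI])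
  also have "\<dots> \<le> (\<Sum>A\<in>I. p ^ a)"
    using assms by (intro sum_mono) (auto simp: I_def intro!: prob_sub[THEN order_trans] intro: finite_subset)
  also have "\<dots> = real (card P choose a) * p ^ a" unfolding I_def using assms by (simp add: n_subsets)
  finally show ?thesis .
qed



lemma pow_div_fact_le_exp:
  fixes x :: real assumes "0 \<le> x"
  shows "x ^ j / fact j \<le> exp x"
proof -
  have "(\<Sum>n\<in>{j}. inverse (fact n) * x ^ n) \<le> (\<Sum>n. inverse (fact n) * x ^ n)"
    by (rule sum_le_suminf[OF summable_exp]) (use assms in auto)
  moreover have "exp x = (\<Sum>n. inverse (fact n) * x ^ n)" by (simp add: exp_def divide_inverse ac_simps)
  ultimately show ?thesis by (simp add: divide_inverse ac_simps)
qed

lemma pow_fact_bound: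
  fixes y :: real assumes "0 \<le> y" "1 \<le> j"
  shows "y ^ j / fact j \<le> (exp 1 * y / real j) ^ j"
proof -
  have jp: "real j > 0" using assms by simp
  have "real j ^ j / fact j \<le> exp (real j)" by (rule pow_div_fact_le_exp) simp
  hence "real j ^ j \<le> exp (real j) * fact j" by (simp add: divide_le_eq)
  hence "y ^ j * real j ^ j \<le> y ^ j * (exp (real j) * fact j)"
    using assms by (intro mult_left_mono) auto
  moreover have e: "exp 1 ^ j = exp (real j)" using exp_of_nat_mult[of j "1::real"] by simp
  moreover have "(exp 1 * y / real j) ^ j = exp (real j) * y ^ j / real j ^ j"
    by (simp add: power_divide power_mult_distrib e)
  ultimately show ?thesis using jp
    by (simp add: divide_le_eq field_simps)
qed

lemma choose_bound:
  assumes "1 \<le> t"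
  shows "real (n choose t) \<le> (exp 1 * real n / real t) ^ t"
proof -
  have "real (n choose t) * fact t \<le> real n ^ t"
    using binomial_fact_pow[of n t] by (metis of_nat_fact of_nat_le_iff of_nat_mult of_nat_power)
  hence "real (n choose t) \<le> real n ^ t / fact t" by (simp add: le_divide_eq)
  also have "\<dots> \<le> (exp 1 * real n / real t) ^ t" by (rule pow_fact_bound) (use assms in auto)
  finally show ?thesis .
qed

lemma choose_pow_bound:
  assumes "N \<le> N'" and that: "0 \<le> p"
  shows "real (N choose a) * p ^ a \<le> (real N' * p) ^ a / fact a"
proof -
  have "real (N choose a) * fact a \<le> real N ^ a"
    using binomial_fact_pow[of N a] by (metis of_nat_fact of_nat_le_iff of_nat_mult of_nat_power)
  also have "\<dots> \<le> real N' ^ a" using assms by (intro power_mono) auto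
  finally have "real (N choose a) \<le> real N' ^ a / fact a" by (simp add: le_divide_eq)
  hence "real (N choose a) * p ^ a \<le> real N' ^ a / fact a * p ^ a"
    using that by (intro mult_right_mono) auto
  thus ?thesis by (simp add: power_mult_distrib)
qed



lemma step5:
  fixes U0 u c D :: real and k :: nat
  assumes "0 < U0" "U0 \<le> u" "0 < c" "real k + 1 \<le> D"
  shows "(exp 1 * u) ^ (k+1) * (c/u) powr D \<le> (exp 1 * U0) ^ (k+1) * (c/U0) powr D"
proof -
  define r where "r = u / U0"
  have r1: "1 \<le> r" using assms unfolding r_def by simp
  have up: "0 < u" using assms by simp
  have e1: "(exp 1 * u) ^ (k+1) = (exp 1 * U0) ^ (k+1) * r ^ (k+1)"
    unfolding r_def using assms by (simp add: power_mult_distrib[symmetric])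
  have e2: "(c/u) powr D = (c/U0) powr D / r powr D"
  proof -
    have "c / u = (c / U0) / r" unfolding r_def using assms by simp
    thus ?thesis using assms r1 by (simp add: powr_divide powr_mult)
  qed
  have "r ^ (k+1) = r powr (real (k+1))" using r1 by (subst powr_realpow) auto
  also have "\<dots> \<le> r powr D" using r1 assms by (intro powr_mono) auto
  finally have rr: "r ^ (k+1) \<le> r powr D" .
  have rp: "0 < r powr D" using r1 by simp
  have "(exp 1 * u) ^ (k+1) * (c/u) powr D = (exp 1 * U0) ^ (k+1) * (c/U0) powr D * (r ^ (k+1) / r powr D)"
    unfolding e1 e2 by simp
  also have "\<dots> \<le> (exp 1 * U0) ^ (k+1) * (c/U0) powr D * 1"
    using rr rp assms by (intro mult_left_mono) auto
  finally show ?thesis by simp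
qed

lemma term_bound:
  fixes n t k a :: nat and U0 c D p L :: real
  assumes n: "0 < n" and t: "1 \<le> t" and k: "1 \<le> k" and U0: "0 < U0" and u: "U0 * real t \<le> real n"
    and p: "0 < p" "p \<le> 2 * L / real n" and D: "real k + 1 \<le> D"
    and c: "2 * exp 1 * real k * L / D \<le> c" "c \<le> U0" "0 < c" and a: "D * real t \<le> real a"
  shows "real (n choose t) * real (n choose (k*t)) * ((real (t*(k*t)) * p) ^ a / fact a)
          \<le> ((exp 1 * U0) ^ (k+1) * (c/U0) powr D) ^ t"
proof -
  define u where "u = real n / real t"
  have tp: "real t > 0" using t by simp
  have up: "U0 \<le> u" unfolding u_def using u tp by (simp add: le_divide_eq)
  have upos: "0 < u" using up U0 by simp
  have D0: "0 < D" using D by simp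
  have a0: "0 < real a" using a D0 tp by (smt (verit) mult_pos_pos)
  hence a1: "1 \<le> a" by simp
  have L0: "0 < L" using p n by (smt (verit) divide_nonpos_pos of_nat_0_less_iff)
  have b1: "real (n choose t) \<le> (exp 1 * u) ^ t"
    using choose_bound[OF t, of n] unfolding u_def by simp
  have b2: "real (n choose (k*t)) \<le> (exp 1 * u) ^ (k*t)"
  proof -
    have kt: "1 \<le> k * t" using k t by (simp add: one_le_mult_iff)
    have "real (n choose (k*t)) \<le> (exp 1 * real n / real (k*t)) ^ (k*t)" by (rule choose_bound[OF kt])
    also have "\<dots> \<le> (exp 1 * u) ^ (k*t)"
    proof (intro power_mono)
      have "real t \<le> real (k*t)" using k tp by (simp add: mult_le_cancel_right1)
      hence "exp 1 * real n / real (k*t) \<le> exp 1 * real n / real t"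
        using tp by (intro divide_left_mono) auto
      thus "exp 1 * real n / real (k*t) \<le> exp 1 * u" unfolding u_def by simp
      show "0 \<le> exp 1 * real n / real (k*t)" by simp
    qed
    finally show ?thesis .
  qed
  have b3: "(real (t*(k*t)) * p) ^ a / fact a \<le> ((c/u) powr D) ^ t"
  proof -
    have "(real (t*(k*t)) * p) ^ a / fact a \<le> (exp 1 * (real (t*(k*t)) * p) / real a) ^ a"
      by (rule pow_fact_bound) (use p a1 in auto)
    also have "\<dots> \<le> (c/u) ^ a"
    proof (intro power_mono)
      show "0 \<le> exp 1 * (real (t*(k*t)) * p) / real a" using p by simp
      have "exp 1 * (real (t*(k*t)) * p) / real a \<le> exp 1 * (real (t*(k*t)) * p) / (D * real t)"
        using a D0 tp p a0 by (intro divide_left_mono) (auto intro!: mult_pos_pos)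
      also have "\<dots> = exp 1 * real k * real t * p / D" using tp by (simp add: field_simps)
      also have "\<dots> \<le> exp 1 * real k * real t * (2 * L / real n) / D"
        using p D0 by (intro divide_right_mono mult_left_mono) auto
      also have "\<dots> = (2 * exp 1 * real k * L / D) * (real t / real n)" by (simp add: field_simps)
      also have "\<dots> \<le> c * (real t / real n)" using c by (intro mult_right_mono) auto
      also have "\<dots> = c / u" unfolding u_def by simp
      finally show "exp 1 * (real (t*(k*t)) * p) / real a \<le> c / u" .
    qed
    also have "\<dots> = (c/u) powr (real a)" using c upos by (simp add: powr_realpow)
    also have "\<dots> \<le> (c/u) powr (D * real t)"
      using a c up U0 upos by (intro powr_mono') (auto simp: divide_le_eq)
    also have "\<dots> = ((c/u) powr D) ^ t"
      using c upos by (simp add: powr_powr[symmetric] powr_realpow)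
    finally show ?thesis .
  qed
  have "real (n choose t) * real (n choose (k*t)) * ((real (t*(k*t)) * p) ^ a / fact a)
        \<le> (exp 1 * u) ^ t * (exp 1 * u) ^ (k*t) * ((c/u) powr D) ^ t"
    using b1 b2 b3 p by (intro mult_mono) auto
  also have "\<dots> = ((exp 1 * u) ^ (k+1) * (c/u) powr D) ^ t"
    by (simp add: power_mult_distrib power_add power_mult[symmetric] mult.commute)
  also have "\<dots> \<le> ((exp 1 * U0) ^ (k+1) * (c/U0) powr D) ^ t"
    using step5[OF U0 up c(3) D] upos by (intro power_mono) auto
  finally show ?thesis .
qed



lemma geom_bound:
  fixes q :: real assumes "0 \<le> q" "q \<le> 1/2"
  shows "(\<Sum>t\<in>{1..N}. q ^ t) \<le> 2 * q - 2 * q ^ (N+1)"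
proof (induction N)
  case 0 thus ?case by simp
next
  case (Suc N)
  have "(\<Sum>t\<in>{1..Suc N}. q ^ t) = (\<Sum>t\<in>{1..N}. q ^ t) + q ^ (Suc N)" by simp
  also have "\<dots> \<le> 2 * q - 2 * q ^ (N+1) + q ^ (N+1)" using Suc by simp
  also have "\<dots> \<le> 2 * q - 2 * q ^ (Suc N + 1)"
  proof -
    have "2 * q ^ (N+2) \<le> q ^ (N+1)"
      using assms mult_right_mono[of "2*q" 1 "q^(N+1)"] by (simp add: power_Suc mult.assoc mult.commute mult.left_commute)
    thus ?thesis by simp
  qed
  finally show ?case .
qed

lemma main_bound:
  fixes n :: nat and p d :: real
  defines "L \<equiv> ln (real n)"
  defines "k \<equiv> nat \<lfloor>L powr 0.2\<rfloor>"
  defines "D \<equiv> L / (ln L)\<^sup>2"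
  defines "U0 \<equiv> L powr 0.9"
  defines "c \<equiv> 2 * exp 1 * L powr 0.2 * (ln L)\<^sup>2"
  defines "q \<equiv> (exp 1 * U0) powr (L powr 0.2 + 1) * (c / U0) powr D"
  assumes pl: "L / real n \<le> p" and pu: "p \<le> 2 * L / real n" and p1: "2 * L / real n \<le> 1"
    and lnL: "1 < ln L" and DL: "L powr 0.2 + 1 \<le> D" and cU: "c \<le> U0"
    and kT: "L powr 0.2 * (real n / U0) \<le> real n" and q2: "q \<le> 1/2" and Ln: "0 < L / real n" and L1: "1 < L"
  shows "measure_pmf.prob (gnp n p) {E. \<not> matching_property n d E} \<le> 2 * q"
proof -
  have n0: "0 < n" using Ln by (cases n) auto
  have U0p: "0 < U0" unfolding U0_def using L1 by simp
  have p0: "0 < p" using pl Ln by simp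
  have pp1: "p \<le> 1" using pu p1 by simp
  have lnL0: "0 < ln L" using lnL by simp
  have c0: "0 < c" unfolding c_def using L1 lnL0 by simp
  have kL: "real k \<le> L powr 0.2" unfolding k_def using L1 by simp
  have "real 1 \<le> L powr 0.2" using L1 by (simp add: ge_one_powr_ge_zero)
  hence k1: "1 \<le> k" unfolding k_def by (rule le_nat_floor)
  define N where "N = nat \<lfloor>real n / U0\<rfloor>"
  have NT: "real N \<le> real n / U0" unfolding N_def using U0p by simp
  have kN: "k * N \<le> n"
  proof -
    have "real k * real N \<le> L powr 0.2 * (real n / U0)"
      using kL NT U0p by (intro mult_mono) auto
    hence "real (k * N) \<le> real n" using kT by simp
    thus ?thesis by linarith
  qed
  define a where "a = (\<lambda>t::nat. nat \<lceil>D * real t\<rceil>)"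
  define Bad where "Bad = (\<Union>t\<in>{1..N}. \<Union>X\<in>{X. X \<subseteq> {..<n} \<and> card X = t}.
      \<Union>Y\<in>{Y. Y \<subseteq> {..<n} \<and> card Y = k * t}. {E. a t \<le> card (E \<inter> pairs X Y)})"
  have sub: "{E. \<not> matching_property n d E} \<subseteq> Bad"
  proof
    fix E assume "E \<in> {E. \<not> matching_property n d E}"
    then obtain S W E' where
      c1: "S \<subseteq> {..<n}" "W \<subseteq> {..<n}" "S \<inter> W = {}" "E' \<subseteq> E" "E' \<subseteq> pairs S W"
        "real (card S) \<le> real n / U0" "\<forall>v\<in>S. D \<le> real (deg E' v)"
      and c2: "\<not>(\<exists>M\<subseteq>E'. (\<forall>s\<in>S. deg M s = k) \<and> (\<forall>w\<in>W. deg M w \<le> 1))"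
      unfolding matching_property_def pairs_def L_def U0_def D_def k_def by blast
    have kN': "k * nat \<lfloor>real n / U0\<rfloor> \<le> n" using kN unfolding N_def .
    obtain t X Y where tXY: "t \<in> {1..N}" "X \<subseteq> {..<n}" "card X = t" "Y \<subseteq> {..<n}" "card Y = k * t"
      "D * real t \<le> real (card (E \<inter> pairs X Y))"
      using det[OF c1 c2 kN'] unfolding N_def by blast
    have "a t \<le> card (E \<inter> pairs X Y)" unfolding a_def using tXY(6) by (simp add: nat_ceiling_le_eq)
    thus "E \<in> Bad" unfolding Bad_def using tXY by blast
  qed
  define B where "B = (\<lambda>t::nat. (real (t * (k * t)) * p) ^ a t / fact (a t))"
  have evt: "measure_pmf.prob (gnp n p) {E. a t \<le> card (E \<inter> pairs X Y)} \<le> B t"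
    if "X \<subseteq> {..<n}" "card X = t" "Y \<subseteq> {..<n}" "card Y = k * t" for t X Y
  proof -
    have fin: "finite X" "finite Y" using that finite_subset by blast+
    have "measure_pmf.prob (gnp n p) {E. a t \<le> card (E \<inter> pairs X Y)} \<le> real (card (pairs X Y) choose a t) * p ^ a t"
      by (rule prob_count) (use p0 pp1 fin finite_pairs in auto)
    also have "\<dots> \<le> B t" unfolding B_def
      by (rule choose_pow_bound) (use card_pairs[OF fin] that p0 in auto)
    finally show ?thesis .
  qed
  have "measure_pmf.prob (gnp n p) {E. \<not> matching_property n d E} \<le> measure_pmf.prob (gnp n p) Bad"
    using sub by (intro measure_pmf.finite_measure_mono) auto
  also have "\<dots> \<le> (\<Sum>t\<in>{1..N}. measure_pmf.prob (gnp n p) (\<Union>X\<in>{X. X \<subseteq> {..<n} \<and> card X = t}.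
      \<Union>Y\<in>{Y. Y \<subseteq> {..<n} \<and> card Y = k * t}. {E. a t \<le> card (E \<inter> pairs X Y)}))"
    unfolding Bad_def by (rule union_bound) simp
  also have "\<dots> \<le> (\<Sum>t\<in>{1..N}. real (n choose t) * real (n choose (k * t)) * B t)"
  proof (rule sum_mono)
    fix t assume "t \<in> {1..N}"
    define Xs where "Xs = {X. X \<subseteq> {..<n} \<and> card X = t}"
    define Ys where "Ys = {Y. Y \<subseteq> {..<n} \<and> card Y = k * t}"
    have fXs: "finite Xs" unfolding Xs_def by auto
    have fYs: "finite Ys" unfolding Ys_def by auto
    have cXs: "card Xs = n choose t" unfolding Xs_def using n_subsets[of "{..<n}" t] by simp
    have cYs: "card Ys = n choose (k * t)" unfolding Ys_def using n_subsets[of "{..<n}" "k*t"] by simp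
    have "measure_pmf.prob (gnp n p) (\<Union>X\<in>Xs. \<Union>Y\<in>Ys. {E. a t \<le> card (E \<inter> pairs X Y)})
        \<le> (\<Sum>X\<in>Xs. measure_pmf.prob (gnp n p) (\<Union>Y\<in>Ys. {E. a t \<le> card (E \<inter> pairs X Y)}))"
      by (rule union_bound[OF fXs])
    also have "\<dots> \<le> (\<Sum>X\<in>Xs. \<Sum>Y\<in>Ys. measure_pmf.prob (gnp n p) {E. a t \<le> card (E \<inter> pairs X Y)})"
      by (intro sum_mono union_bound[OF fYs])
    also have "\<dots> \<le> (\<Sum>X\<in>Xs. \<Sum>Y\<in>Ys. B t)"
      by (intro sum_mono evt) (auto simp: Xs_def Ys_def)
    also have "\<dots> = real (n choose t) * real (n choose (k * t)) * B t" using cXs cYs by simp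
    finally show "measure_pmf.prob (gnp n p) (\<Union>X\<in>{X. X \<subseteq> {..<n} \<and> card X = t}.
      \<Union>Y\<in>{Y. Y \<subseteq> {..<n} \<and> card Y = k * t}. {E. a t \<le> card (E \<inter> pairs X Y)})
       \<le> real (n choose t) * real (n choose (k * t)) * B t" unfolding Xs_def Ys_def .
  qed
  also have "\<dots> \<le> (\<Sum>t\<in>{1..N}. q ^ t)"
  proof (rule sum_mono)
    fix t assume t: "t \<in> {1..N}"
    have "U0 * real t \<le> U0 * real N" using t U0p by (intro mult_left_mono) auto
    also have "\<dots> \<le> real n" using NT U0p by (auto simp: le_divide_eq mult.commute)
    finally have tN: "U0 * real t \<le> real n" .
    have Dk: "real k + 1 \<le> D" using kL DL by simp
    have cc: "2 * exp 1 * real k * L / D \<le> c"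
    proof -
      have "2 * exp 1 * real k * L / D = 2 * exp 1 * real k * (ln L)\<^sup>2"
        unfolding D_def using L1 lnL0 by (simp add: field_simps)
      also have "\<dots> \<le> c" unfolding c_def using kL by (intro mult_right_mono mult_left_mono) auto
      finally show ?thesis .
    qed
    have at: "D * real t \<le> real (a t)" unfolding a_def by linarith
    have "real (n choose t) * real (n choose (k * t)) * B t \<le> ((exp 1 * U0) ^ (k+1) * (c/U0) powr D) ^ t"
    proof -
      have t1: "1 \<le> t" using t by simp
      show ?thesis unfolding B_def by (rule term_bound[OF n0 t1 k1 U0p tN p0 pu Dk cc cU c0 at])
    qed
    also have "\<dots> \<le> q ^ t" unfolding q_def
    proof (intro power_mono mult_right_mono)
      have u1: "1 \<le> U0" unfolding U0_def using L1 by (simp add: ge_one_powr_ge_zero)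
      have "1 * 1 \<le> exp 1 * U0" by (rule mult_mono) (use u1 in auto)
      hence e1: "1 \<le> exp 1 * U0" by simp
      have "(exp 1 * U0) ^ (k+1) = (exp 1 * U0) powr (real (k+1))" using e1 by (subst powr_realpow) auto
      also have "\<dots> \<le> (exp 1 * U0) powr (L powr 0.2 + 1)" using e1 kL by (intro powr_mono) auto
      finally show "(exp 1 * U0) ^ (k+1) \<le> (exp 1 * U0) powr (L powr 0.2 + 1)" .
    qed (use U0p in auto)
    finally show "real (n choose t) * real (n choose (k * t)) * B t \<le> q ^ t" .
  qed
  also have "\<dots> \<le> 2 * q - 2 * q ^ (N+1)" by (rule geom_bound) (use q2 in \<open>auto simp: q_def\<close>)
  also have "\<dots> \<le> 2 * q" using q_def by simp
  finally show ?thesis .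
qed


theorem lemma8:
  fixes p :: "nat \<Rightarrow> real" and d :: "nat \<Rightarrow> real"
  assumes "eventually (\<lambda>n. ln (real n) / real n \<le> p n \<and> p n \<le> 2 * ln (real n) / real n) sequentially"
    and "d \<longlonglongrightarrow> 0"
  shows "(\<lambda>n. measure_pmf.prob (gnp n (p n)) {E. matching_property n (d n) E}) \<longlonglongrightarrow> 1"
proof -
  define q where "q = (\<lambda>n::nat. (exp 1 * ln (real n) powr 0.9) powr (ln (real n) powr 0.2 + 1) *
     ((2 * exp 1 * ln (real n) powr 0.2 * (ln (ln (real n)))\<^sup>2) / ln (real n) powr 0.9) powr
       (ln (real n) / (ln (ln (real n)))\<^sup>2))"
  have q0: "q \<longlonglongrightarrow> 0" unfolding q_def by real_asymp
  have e1: "eventually (\<lambda>n. 2 * ln (real n) / real n \<le> 1) sequentially" by real_asymp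
  have e2: "eventually (\<lambda>n. 1 < ln (ln (real n))) sequentially" by real_asymp
  have e3: "eventually (\<lambda>n. ln (real n) powr 0.2 + 1 \<le> ln (real n) / (ln (ln (real n)))\<^sup>2) sequentially" by real_asymp
  have e4: "eventually (\<lambda>n. 2 * exp 1 * ln (real n) powr 0.2 * (ln (ln (real n)))\<^sup>2 \<le> ln (real n) powr 0.9) sequentially" by real_asymp
  have e5: "eventually (\<lambda>n. ln (real n) powr 0.2 * (real n / ln (real n) powr 0.9) \<le> real n) sequentially" by real_asymp
  have e6: "eventually (\<lambda>n. 0 < ln (real n) / real n) sequentially" by real_asymp
  have e7: "eventually (\<lambda>n. 1 < ln (real n)) sequentially" by real_asymp
  have e8: "eventually (\<lambda>n. q n \<le> 1/2) sequentially"
    using order_tendstoD(2)[OF q0, of "1/2"] by (auto elim: eventually_mono)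
  have ev: "eventually (\<lambda>n. 1 - 2 * q n \<le> measure_pmf.prob (gnp n (p n)) {E. matching_property n (d n) E}) sequentially"
    using assms(1) e1 e2 e3 e4 e5 e6 e7 e8
  proof eventually_elim
    case (elim n)
    have b: "measure_pmf.prob (gnp n (p n)) {E. \<not> matching_property n (d n) E} \<le> 2 * q n"
      unfolding q_def by (rule main_bound) (use elim in \<open>auto simp: q_def\<close>)
    have "{E. matching_property n (d n) E} = space (measure_pmf (gnp n (p n))) - {E. \<not> matching_property n (d n) E}"
      by auto
    hence "measure_pmf.prob (gnp n (p n)) {E. matching_property n (d n) E} = 1 - measure_pmf.prob (gnp n (p n)) {E. \<not> matching_property n (d n) E}"
      using measure_pmf.prob_compl by simp
    thus ?case using b by simp
  qed
  have ev2: "eventually (\<lambda>n. measure_pmf.prob (gnp n (p n)) {E. matching_property n (d n) E} \<le> 1) sequentially"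
    by (simp add: measure_pmf.prob_le_1)
  have lim1: "(\<lambda>n. 1 - 2 * q n) \<longlonglongrightarrow> 1"
    using tendsto_diff[OF tendsto_const tendsto_mult[OF tendsto_const q0], of 1 2] by simp
  show ?thesis by (rule tendsto_sandwich[OF ev ev2 lim1 tendsto_const])
qed

end
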